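(* Let $\mathcal{H}_C,\mathcal{H}_{C'}$ be finite-dimensional Hilbert spaces and let $\{\sigma_{abd|xyw}\}$ (with $a,b,d,x,y,w$ ranging over finite sets) be a (non-signalling) assemblage of positive semidefinite operators on $\mathcal{H}_{C}\otimes\mathcal{H}_{C'}$, prepared for Charlie after Alice, Bob and Dani, with inputs $x,y,w$, produce outputs $a,b,d$. Suppose that: (i) for all $x,y$: $\sigma_{d|w}=\mathrm{tr}_{C'}\big\{\sum_{a,b}\sigma_{abd|xyw}\big\}$ for all $d,w$; (ii) $\sum_{a,b}\sigma_{abd|xyw}=\psi\otimes\sigma_{d|w}$ for all $d,w,x,y$, where $\{\sigma_{d|w}\}_{d,w}$ is an extremal assemblage (of operators on $\mathcal{H}_C$) and $\psi$ is (the density operator of) a pure state on $\mathcal{H}_{C'}$. Then $\sigma_{abd|xyw}=\sigma_{ab|xy}\otimes\sigma_{d|w}$ for all $a,b,d,x,y,w$, where $\sigma_{ab|xy}=\mathrm{tr}_C\big\{\sum_d\sigma_{abd|xyw}\big\}$ is an operator on $\mathcal{H}_{C'}$ independent of $w$.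
   Context: An assemblage $\{\sigma_{abd|xyw}\}$ is a family of positive semidefinite operators whose sum over all outputs $a,b,d$ is a density operator independent of the inputs, and which satisfies the no-signalling conditions: summing over the output of any subset of the parties yields operators independent of those parties' inputs (in particular $p(ab|xyw)=\mathrm{tr}\sum_d\sigma_{abd|xyw}$ is independent of $w$). A bipartite assemblage $\{\sigma_{d|w}\}$ is a family of positive semidefinite operators with $\sum_d\sigma_{d|w}$ a density operator independent of $w$; it is extremal if it cannot be written as a nontrivial convex combination of other assemblages with the same input and output sets. In the tensor products the factor $\psi$ (resp. $\sigma_{ab|xy}$) acts on $\mathcal{H}_{C'}$ and $\sigma_{d|w}$ acts on $\mathcal{H}_C$. *)

theory Defs
  imports "Jordan_Normal_Form.Matrix"
begin

definition msum :: "nat \<Rightarrow> ('i \<Rightarrow> complex mat) \<Rightarrow> 'i set \<Rightarrow> complex mat" where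
  "msum n f I = mat n n (\<lambda>ij. \<Sum>i\<in>I. f i $$ ij)"

definition mtrace :: "complex mat \<Rightarrow> complex" where
  "mtrace A = (\<Sum>i<dim_row A. A $$ (i, i))"

definition psd :: "nat \<Rightarrow> complex mat \<Rightarrow> bool" where
  "psd n A \<longleftrightarrow> A \<in> carrier_mat n n \<and>
     (\<forall>v \<in> carrier_vec n. Im ((A *\<^sub>v v) \<bullet>c v) = 0 \<and> Re ((A *\<^sub>v v) \<bullet>c v) \<ge> 0)"

definition density :: "nat \<Rightarrow> complex mat \<Rightarrow> bool" where
  "density n A \<longleftrightarrow> psd n A \<and> mtrace A = 1"

definition pure_state :: "nat \<Rightarrow> complex mat \<Rightarrow> bool" where
  "pure_state n A \<longleftrightarrow> (\<exists>v \<in> carrier_vec n. v \<bullet>c v = 1 \<and>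
      A = mat n n (\<lambda>(i, j). v $ i * cnj (v $ j)))"

text \<open>H_C \<otimes> H_C' with dim H_C = nC, dim H_C' = nC'; the basis vector e_i \<otimes> f_j
  (i < nC, j < nC') has index i * nC' + j.  tensorCC S T is S \<otimes> T with S acting on H_C
  and T acting on H_C'.\<close>

definition tensorCC :: "nat \<Rightarrow> nat \<Rightarrow> complex mat \<Rightarrow> complex mat \<Rightarrow> complex mat" where
  "tensorCC nC nC' S T = mat (nC * nC') (nC * nC')
     (\<lambda>(k, l). S $$ (k div nC', l div nC') * T $$ (k mod nC', l mod nC'))"

definition ptrace_C' :: "nat \<Rightarrow> nat \<Rightarrow> complex mat \<Rightarrow> complex mat" where
  "ptrace_C' nC nC' A = mat nC nC (\<lambda>(i, i'). \<Sum>j<nC'. A $$ (i * nC' + j, i' * nC' + j))"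

definition ptrace_C :: "nat \<Rightarrow> nat \<Rightarrow> complex mat \<Rightarrow> complex mat" where
  "ptrace_C nC nC' A = mat nC' nC' (\<lambda>(j, j'). \<Sum>i<nC. A $$ (i * nC' + j, i * nC' + j'))"

definition bi_assemblage :: "nat \<Rightarrow> ('d::finite \<Rightarrow> 'w::finite \<Rightarrow> complex mat) \<Rightarrow> bool" where
  "bi_assemblage n s \<longleftrightarrow> (\<forall>d w. psd n (s d w)) \<and>
     (\<forall>w. density n (msum n (\<lambda>d. s d w) UNIV)) \<and>
     (\<forall>w w'. msum n (\<lambda>d. s d w) UNIV = msum n (\<lambda>d. s d w') UNIV)"

definition extremal_bi_assemblage :: "nat \<Rightarrow> ('d::finite \<Rightarrow> 'w::finite \<Rightarrow> complex mat) \<Rightarrow> bool" where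
  "extremal_bi_assemblage n s \<longleftrightarrow> bi_assemblage n s \<and>
     (\<forall>(p::real) t1 t2. 0 < p \<and> p < 1 \<and> bi_assemblage n t1 \<and> bi_assemblage n t2 \<and>
        (\<forall>d w. s d w = complex_of_real p \<cdot>\<^sub>m t1 d w + complex_of_real (1 - p) \<cdot>\<^sub>m t2 d w)
        \<longrightarrow> t1 = s \<and> t2 = s)"

definition assemblage :: "nat \<Rightarrow>
   ('a::finite \<Rightarrow> 'b::finite \<Rightarrow> 'd::finite \<Rightarrow> 'x::finite \<Rightarrow> 'y::finite \<Rightarrow> 'w::finite \<Rightarrow> complex mat) \<Rightarrow> bool" where
  "assemblage n s \<longleftrightarrow>
     (\<forall>a b d x y w. psd n (s a b d x y w)) \<and>
     (\<forall>x y w. density n (msum n (\<lambda>(a, b, d). s a b d x y w) UNIV)) \<and>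
     (\<forall>x y w x' y' w'. msum n (\<lambda>(a, b, d). s a b d x y w) UNIV
                       = msum n (\<lambda>(a, b, d). s a b d x' y' w') UNIV) \<and>
     \<comment> \<open>no-signalling: summing over outputs of a subset of parties removes dependence on their inputs\<close>
     (\<forall>b d x y w x'. msum n (\<lambda>a. s a b d x y w) UNIV = msum n (\<lambda>a. s a b d x' y w) UNIV) \<and>
     (\<forall>a d x y w y'. msum n (\<lambda>b. s a b d x y w) UNIV = msum n (\<lambda>b. s a b d x y' w) UNIV) \<and>
     (\<forall>a b x y w w'. msum n (\<lambda>d. s a b d x y w) UNIV = msum n (\<lambda>d. s a b d x y w') UNIV) \<and>
     (\<forall>d x y w x' y'. msum n (\<lambda>(a, b). s a b d x y w) UNIV = msum n (\<lambda>(a, b). s a b d x' y' w) UNIV) \<and>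
     (\<forall>b x y w x' w'. msum n (\<lambda>(a, d). s a b d x y w) UNIV = msum n (\<lambda>(a, d). s a b d x' y w') UNIV) \<and>
     (\<forall>a x y w y' w'. msum n (\<lambda>(b, d). s a b d x y w) UNIV = msum n (\<lambda>(b, d). s a b d x y' w') UNIV)"

end

theory Submission
  imports Defs
begin

definition bf :: "nat \<Rightarrow> complex mat \<Rightarrow> (nat \<Rightarrow> complex) \<Rightarrow> (nat \<Rightarrow> complex) \<Rightarrow> complex" where
  "bf n A y z = (\<Sum>k<n. \<Sum>l<n. cnj (y k) * A $$ (k, l) * z l)"

abbreviation qf where "qf n A z \<equiv> bf n A z z"

definition qpos :: "nat \<Rightarrow> complex mat \<Rightarrow> bool" where
  "qpos n A \<longleftrightarrow> (\<forall>z. Im (qf n A z) = 0 \<and> Re (qf n A z) \<ge> 0)"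

lemma qf_vec:
  assumes "A \<in> carrier_mat n n"
  shows "(A *\<^sub>v vec n z) \<bullet>c vec n z = qf n A z"
proof -
  have "(A *\<^sub>v vec n z) \<bullet>c vec n z = (\<Sum>k<n. (\<Sum>l<n. A $$ (k, l) * z l) * cnj (z k))"
    using assms by (auto simp: scalar_prod_def row_def lessThan_atLeast0 intro!: sum.cong)
  also have "\<dots> = qf n A z"
    unfolding bf_def by (auto simp: sum_distrib_right intro!: sum.cong)
  finally show ?thesis .
qed

lemma psd_qpos: "psd n A \<longleftrightarrow> A \<in> carrier_mat n n \<and> qpos n A"
proof
  assume a: "psd n A"
  hence c: "A \<in> carrier_mat n n" unfolding psd_def by auto
  show "A \<in> carrier_mat n n \<and> qpos n A"
    using a c unfolding psd_def qpos_def
    by (metis qf_vec vec_carrier)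
next
  assume a: "A \<in> carrier_mat n n \<and> qpos n A"
  show "psd n A" unfolding psd_def
  proof (intro conjI ballI)
    fix v :: "complex vec" assume v: "v \<in> carrier_vec n"
    have "vec n (($) v) = v" using v by auto
    then have "(A *\<^sub>v v) \<bullet>c v = qf n A (($) v)" using qf_vec[of A n "($) v"] a by simp
    then show "Im ((A *\<^sub>v v) \<bullet>c v) = 0" "0 \<le> Re ((A *\<^sub>v v) \<bullet>c v)" using a unfolding qpos_def by auto
  qed (use a in auto)
qed

lemma bf_expand: "bf n A (\<lambda>k. z k + c * y k) (\<lambda>k. z k + c * y k)
   = bf n A z z + cnj c * bf n A y z + c * bf n A z y + cnj c * c * bf n A y y"
  unfolding bf_def
  by (simp add: algebra_simps sum.distrib sum_distrib_left)

lemma quad_zero: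
  fixes r q :: real
  assumes "\<forall>t. t * r + t^2 * q \<ge> 0" "q \<ge> 0"
  shows "r = 0"
proof (rule ccontr)
  assume "r \<noteq> 0"
  define t where "t = - r / (1 + q)"
  have "t * r + t^2 * q = -(r^2) / (1+q)^2"
  proof -
    have h: "1 + q \<noteq> 0" using assms(2) by simp
    show ?thesis unfolding t_def using h
      by (simp add: divide_simps power2_eq_square) (simp add: algebra_simps)
  qed
  also have "\<dots> < 0" using \<open>r \<noteq> 0\<close> assms(2) by (simp add: divide_neg_pos)
  finally show False using assms(1) by (metis not_le)
qed

lemma kernel:
  assumes "qpos n A" "qf n A z = 0"
  shows "bf n A y z = 0 \<and> bf n A z y = 0"
proof -
  define a where "a = bf n A y z"
  define b where "b = bf n A z y"
  define q where "q = qf n A y"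
  have e: "\<And>c. qf n A (\<lambda>k. z k + c * y k) = cnj c * a + c * b + cnj c * c * q"
    using bf_expand[of n A z _ y] assms(2) unfolding a_def b_def q_def by simp
  have P: "\<And>c. Im (cnj c * a + c * b + cnj c * c * q) = 0 \<and> Re (cnj c * a + c * b + cnj c * c * q) \<ge> 0"
    using assms(1) unfolding qpos_def by (metis e)
  have q: "Im q = 0" "Re q \<ge> 0" using assms(1) unfolding qpos_def q_def by auto
  have i1: "Im a + Im b = 0" using P[of 1] q by simp
  have i2: "Re b - Re a = 0" using P[of "\<i>"] q by simp
  have r1: "\<forall>t. t * (Re a + Re b) + t^2 * Re q \<ge> 0"
  proof
    fix t :: real
    show "t * (Re a + Re b) + t^2 * Re q \<ge> 0" using P[of "complex_of_real t"] q
      by (simp add: algebra_simps power2_eq_square)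
  qed
  have r2: "\<forall>t. t * (Im a - Im b) + t^2 * Re q \<ge> 0"
  proof
    fix t :: real
    show "t * (Im a - Im b) + t^2 * Re q \<ge> 0" using P[of "\<i> * complex_of_real t"] q
      by (simp add: algebra_simps power2_eq_square)
  qed
  have "Re a + Re b = 0" using quad_zero[OF r1 q(2)] .
  moreover have "Im a - Im b = 0" using quad_zero[OF r2 q(2)] .
  ultimately have "a = 0" "b = 0" using i1 i2 by (auto simp: complex_eq_iff)
  then show ?thesis unfolding a_def b_def by simp
qed

lemma bf_delta_left: "i < n \<Longrightarrow> bf n A (\<lambda>k. if k = i then 1 else 0) z = (\<Sum>l<n. A $$ (i, l) * z l)"
  unfolding bf_def by (simp add: if_distrib if_distribR sum.If_cases cong: if_cong)

lemma bf_delta_right: "i < n \<Longrightarrow> bf n A z (\<lambda>k. if k = i then 1 else 0) = (\<Sum>k<n. cnj (z k) * A $$ (k, i))"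
  unfolding bf_def by (simp add: if_distrib if_distribR sum.If_cases cong: if_cong)

lemma kernel_rows:
  assumes "qpos n A" "qf n A z = 0" "i < n"
  shows "(\<Sum>l<n. A $$ (i, l) * z l) = 0" "(\<Sum>k<n. cnj (z k) * A $$ (k, i)) = 0"
  using kernel[OF assms(1,2), of "\<lambda>k. if k = i then 1 else 0"] assms(3)
  by (auto simp: bf_delta_left bf_delta_right)

lemma sum_split: "(\<Sum>k<(m::nat)*n. f k) = (\<Sum>i<m. \<Sum>j<n. f (i*n+j))"
proof (induction m)
  case 0 then show ?case by simp
next
  case (Suc m)
  have "(\<Sum>k<Suc m * n. f k) = (\<Sum>k<m*n. f k) + (\<Sum>k\<in>{m*n..<m*n+n}. f k)"
    by (simp add: lessThan_atLeast0 sum.atLeastLessThan_concat add.commute)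
  also have "(\<Sum>k\<in>{m*n..<m*n+n}. f k) = (\<Sum>j<n. f (m*n+j))"
    using sum.shift_bounds_nat_ivl[of f 0 "m*n" n] by (simp add: lessThan_atLeast0 add.commute)
  finally show ?case using Suc by simp
qed

definition tv :: "nat \<Rightarrow> (nat \<Rightarrow> complex) \<Rightarrow> (nat \<Rightarrow> complex) \<Rightarrow> nat \<Rightarrow> complex" where
  "tv n u w k = u (k div n) * w (k mod n)"

lemma idx_lt: "(i::nat) < m \<Longrightarrow> j < n \<Longrightarrow> i * n + j < m * n"
proof -
  assume "i < m" "j < n"
  then have "i * n + j < i * n + n" by simp
  also have "\<dots> = Suc i * n" by simp
  also have "\<dots> \<le> m * n" using \<open>i < m\<close> by (intro mult_right_mono) auto
  finally show ?thesis .
qed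

lemma idx_div[simp]: "(j::nat) < n \<Longrightarrow> (i * n + j) div n = i"
  by simp
lemma idx_mod[simp]: "(j::nat) < n \<Longrightarrow> (i * n + j) mod n = j"
  by simp

lemma qf_tensor: "qf (m*n) (tensorCC m n S T) (tv n u w) = qf m S u * qf n T w"
proof -
  have "qf (m*n) (tensorCC m n S T) (tv n u w) =
     (\<Sum>i<m. \<Sum>j<n. \<Sum>i'<m. \<Sum>j'<n. cnj (u i * w j) * (S $$ (i,i') * T $$ (j,j')) * (u i' * w j'))"
    unfolding bf_def sum_split tv_def tensorCC_def
    by (intro sum.cong refl) (simp add: idx_lt)
  also have "\<dots> = (\<Sum>i<m. \<Sum>i'<m. \<Sum>j<n. \<Sum>j'<n. cnj (u i * w j) * (S $$ (i,i') * T $$ (j,j')) * (u i' * w j'))"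
    by (rule sum.cong[OF refl], rule sum.swap)
  also have "\<dots> = qf m S u * qf n T w"
    unfolding bf_def sum_distrib_right
    unfolding sum_distrib_left
    by (intro sum.cong refl) (simp add: algebra_simps)
  finally show ?thesis .
qed

lemma sum_tv_right:
  assumes "i0 < m"
  shows "(\<Sum>l<m*n. X $$ (r, l) * tv n (\<lambda>k. if k = i0 then 1 else 0) w l) = (\<Sum>j<n. X $$ (r, i0*n+j) * w j)"
  unfolding sum_split tv_def using assms
  by (simp add: if_distrib if_distribR sum.If_cases cong: if_cong)

lemma sum_tv_left:
  assumes "i0 < m"
  shows "(\<Sum>k<m*n. cnj (tv n (\<lambda>k. if k = i0 then 1 else 0) w k) * X $$ (k, r)) = (\<Sum>j<n. cnj (w j) * X $$ (i0*n+j, r))"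
  unfolding sum_split tv_def using assms
  by (simp add: if_distrib if_distribR sum.If_cases cong: if_cong)

lemma qf_proj:
  assumes "P = mat n n (\<lambda>(i,j). v i * cnj (v j))"
  shows "qf n P w = cnj (\<Sum>j<n. cnj (v j) * w j) * (\<Sum>j<n. cnj (v j) * w j)"
proof -
  have "cnj (\<Sum>j<n. cnj (v j) * w j) * (\<Sum>j<n. cnj (v j) * w j) =
     (\<Sum>k<n. \<Sum>l<n. cnj (cnj (v k) * w k) * (cnj (v l) * w l))"
    by (simp add: cnj_sum sum_product)
  also have "\<dots> = qf n P w"
    unfolding bf_def assms by (intro sum.cong refl) (simp add: algebra_simps)
  finally show ?thesis by simp
qed

lemma factor:
  fixes m n :: nat
  assumes X: "psd (m*n) X"
    and le: "\<forall>z. Re (qf (m*n) X z) \<le> Re (qf (m*n) (tensorCC m n S P) z)"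
    and P: "P = mat n n (\<lambda>(i,j). v i * cnj (v j))"
    and nv: "(\<Sum>j<n. v j * cnj (v j)) = 1"
  shows "X = tensorCC m n (ptrace_C' m n X) P"
proof -
  have Xc: "X \<in> carrier_mat (m*n) (m*n)" and Xq: "qpos (m*n) X" using X psd_qpos by auto
  have nv': "(\<Sum>j<n. cnj (v j) * v j) = 1" using nv by (simp add: mult.commute)
  have ker: "(\<Sum>j<n. X $$ (r, i*n+j) * w j) = 0 \<and> (\<Sum>j<n. cnj (w j) * X $$ (i*n+j, r)) = 0"
    if w: "(\<Sum>j<n. cnj (v j) * w j) = 0" and i: "i < m" and r: "r < m*n" for w i r
  proof -
    define z where "z = tv n (\<lambda>k. if k = i then 1 else 0) w"
    have "qf n P w = 0" using qf_proj[OF P] w by simp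
    then have "qf (m*n) (tensorCC m n S P) z = 0" unfolding z_def qf_tensor by simp
    then have "Re (qf (m*n) X z) \<le> 0" using le[rule_format, of z] by simp
    moreover have "Im (qf (m*n) X z) = 0" "Re (qf (m*n) X z) \<ge> 0" using Xq unfolding qpos_def by auto
    ultimately have "qf (m*n) X z = 0" by (simp add: complex_eq_iff)
    from kernel_rows[OF Xq this r] show ?thesis
      unfolding z_def sum_tv_right[OF i] sum_tv_left[OF i] by simp
  qed
  define wj where "wj j1 = (\<lambda>j. (if j = j1 then 1 else 0) - cnj (v j1) * v j)" for j1
  have wj0: "(\<Sum>j<n. cnj (v j) * wj j1 j) = 0" if "j1 < n" for j1
  proof -
    have "(\<Sum>j<n. cnj (v j) * wj j1 j) = (\<Sum>j<n. (if j = j1 then cnj (v j) else 0)) - (\<Sum>j<n. cnj (v j1) * (cnj (v j) * v j))"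
    proof -
      have "\<And>j. cnj (v j) * wj j1 j = (if j = j1 then cnj (v j) else 0) - cnj (v j1) * (cnj (v j) * v j)"
        by (simp add: wj_def algebra_simps)
      then show ?thesis by (simp add: sum_subtractf)
    qed
    also have "\<dots> = cnj (v j1) - cnj (v j1) * (\<Sum>j<n. cnj (v j) * v j)"
      using that by (simp add: sum_distrib_left)
    finally have "(\<Sum>j<n. cnj (v j) * wj j1 j) = cnj (v j1) - cnj (v j1) * (\<Sum>j<n. cnj (v j) * v j)" .
    then show ?thesis using nv' by simp
  qed
  have C1: "X $$ (r, i*n+j1) = cnj (v j1) * (\<Sum>j<n. X $$ (r, i*n+j) * v j)"
    if "i < m" "r < m*n" "j1 < n" for r i j1
  proof -
    have "(\<Sum>j<n. X $$ (r, i*n+j) * wj j1 j) = 0" using ker[OF wj0 that(1,2)] that(3) by blast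
    moreover have "(\<Sum>j<n. X $$ (r, i*n+j) * wj j1 j) = X $$ (r, i*n+j1) - cnj (v j1) * (\<Sum>j<n. X $$ (r, i*n+j) * v j)"
    proof -
      have "\<And>j. X $$ (r, i*n+j) * wj j1 j = (if j = j1 then X $$ (r, i*n+j) else 0) - cnj (v j1) * (X $$ (r, i*n+j) * v j)"
        by (simp add: wj_def algebra_simps)
      then show ?thesis using that(3) by (simp add: sum_subtractf sum_distrib_left)
    qed
    ultimately show ?thesis by simp
  qed
  have R1: "X $$ (i*n+j1, r) = v j1 * (\<Sum>j<n. cnj (v j) * X $$ (i*n+j, r))"
    if "i < m" "r < m*n" "j1 < n" for r i j1
  proof -
    have "(\<Sum>j<n. cnj (wj j1 j) * X $$ (i*n+j, r)) = 0" using ker[OF wj0 that(1,2)] that(3) by blast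
    moreover have "(\<Sum>j<n. cnj (wj j1 j) * X $$ (i*n+j, r)) = X $$ (i*n+j1, r) - v j1 * (\<Sum>j<n. cnj (v j) * X $$ (i*n+j, r))"
    proof -
      have "\<And>j. cnj (wj j1 j) * X $$ (i*n+j, r) = (if j = j1 then X $$ (i*n+j, r) else 0) - v j1 * (cnj (v j) * X $$ (i*n+j, r))"
        by (simp add: wj_def algebra_simps)
      then show ?thesis using that(3) by (simp add: sum_subtractf sum_distrib_left)
    qed
    ultimately show ?thesis by simp
  qed
  define D where "D i0 i = (\<Sum>j<n. \<Sum>k<n. cnj (v k) * X $$ (i0*n+k, i*n+j) * v j)" for i0 i
  have E: "X $$ (i0*n+j0, i*n+j1) = v j0 * cnj (v j1) * D i0 i"
    if "i0 < m" "i < m" "j0 < n" "j1 < n" for i0 i j0 j1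
  proof -
    have "X $$ (i0*n+j0, i*n+j1) = cnj (v j1) * (\<Sum>j<n. X $$ (i0*n+j0, i*n+j) * v j)"
      using C1 idx_lt that by blast
    also have "\<dots> = cnj (v j1) * (\<Sum>j<n. v j0 * (\<Sum>k<n. cnj (v k) * X $$ (i0*n+k, i*n+j)) * v j)"
      using R1 idx_lt that by (intro arg_cong[where f="\<lambda>x. cnj (v j1) * x"] sum.cong refl) auto
    also have "\<dots> = v j0 * cnj (v j1) * D i0 i"
      unfolding D_def sum_distrib_left sum_distrib_right
      by (intro sum.cong refl) (simp add: algebra_simps)
    finally show ?thesis .
  qed
  have PT: "ptrace_C' m n X $$ (i0, i) = D i0 i" if "i0 < m" "i < m" for i0 i
  proof -
    have "ptrace_C' m n X $$ (i0, i) = (\<Sum>j<n. v j * cnj (v j) * D i0 i)"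
      unfolding ptrace_C'_def using that E by simp
    also have "\<dots> = D i0 i" using nv by (simp add: sum_distrib_right[symmetric])
    finally show ?thesis .
  qed
  show ?thesis
  proof (rule eq_matI)
    fix k l assume k: "k < dim_row (tensorCC m n (ptrace_C' m n X) P)" and l: "l < dim_col (tensorCC m n (ptrace_C' m n X) P)"
    then have k': "k < m*n" and l': "l < m*n" by (auto simp: tensorCC_def)
    then have n0: "n > 0" by (cases n) auto
    have kd: "k div n < m" "l div n < m" using k' l' by (auto simp: less_mult_imp_div_less)
    have km: "k mod n < n" "l mod n < n" using n0 by auto
    have kk: "k = (k div n) * n + k mod n" "l = (l div n) * n + l mod n" by simp_all
    have "X $$ (k, l) = v (k mod n) * cnj (v (l mod n)) * D (k div n) (l div n)"
      using E[OF kd km] kk by simp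
    then show "X $$ (k, l) = tensorCC m n (ptrace_C' m n X) P $$ (k, l)"
      using k' l' kd km PT[OF kd] unfolding tensorCC_def P by simp
  qed (use Xc in \<open>auto simp: tensorCC_def\<close>)
qed

lemma msum_cong: "(\<And>i. i \<in> I \<Longrightarrow> f i = g i) \<Longrightarrow> msum n f I = msum n g I"
  unfolding msum_def by (intro cong[OF refl, where f="mat n n"] ext sum.cong) auto

lemma msum_carrier[simp]: "msum n f I \<in> carrier_mat n n"
  unfolding msum_def by simp

lemma qf_msum: "qf n (msum n f I) z = (\<Sum>i\<in>I. qf n (f i) z)"
proof -
  have "qf n (msum n f I) z = (\<Sum>k<n. \<Sum>l<n. \<Sum>i\<in>I. cnj (z k) * f i $$ (k, l) * z l)"
    unfolding bf_def msum_def by (simp add: sum_distrib_left sum_distrib_right)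
  also have "\<dots> = (\<Sum>k<n. \<Sum>i\<in>I. \<Sum>l<n. cnj (z k) * f i $$ (k, l) * z l)"
    by (rule sum.cong[OF refl], rule sum.swap)
  also have "\<dots> = (\<Sum>i\<in>I. qf n (f i) z)"
    unfolding bf_def by (rule sum.swap)
  finally show ?thesis .
qed

lemma qpos_msum: "(\<And>i. i \<in> I \<Longrightarrow> qpos n (f i)) \<Longrightarrow> qpos n (msum n f I)"
  unfolding qpos_def qf_msum by (auto simp: sum_nonneg)

lemma psd_msum: "(\<And>i. i \<in> I \<Longrightarrow> psd n (f i)) \<Longrightarrow> psd n (msum n f I)"
  using qpos_msum[of I n f] psd_qpos by auto

lemma qf_le_msum:
  assumes "finite I" "i0 \<in> I" "\<And>i. i \<in> I \<Longrightarrow> qpos n (f i)"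
  shows "Re (qf n (f i0) z) \<le> Re (qf n (msum n f I) z)"
  unfolding qf_msum Re_sum
  using assms by (intro member_le_sum) (auto simp: qpos_def)

lemma ptrace_msum:
  fixes m n :: nat
  shows "ptrace_C' m n (msum (m*n) f I) = msum m (\<lambda>i. ptrace_C' m n (f i)) I"
proof (rule eq_matI)
  fix a b assume "a < dim_row (msum m (\<lambda>i. ptrace_C' m n (f i)) I)" "b < dim_col (msum m (\<lambda>i. ptrace_C' m n (f i)) I)"
  then have ab: "a < m" "b < m" by (auto simp: msum_def)
  have "ptrace_C' m n (msum (m*n) f I) $$ (a, b) = (\<Sum>j<n. \<Sum>i\<in>I. f i $$ (a*n+j, b*n+j))"
    unfolding ptrace_C'_def msum_def using ab by (simp add: idx_lt)
  also have "\<dots> = (\<Sum>i\<in>I. \<Sum>j<n. f i $$ (a*n+j, b*n+j))" by (rule sum.swap)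
  also have "\<dots> = msum m (\<lambda>i. ptrace_C' m n (f i)) I $$ (a, b)"
    unfolding ptrace_C'_def msum_def using ab by simp
  finally show "ptrace_C' m n (msum (m*n) f I) $$ (a, b) = msum m (\<lambda>i. ptrace_C' m n (f i)) I $$ (a, b)" .
qed (auto simp: msum_def ptrace_C'_def)

lemma qf_minus:
  assumes "A \<in> carrier_mat n n" "B \<in> carrier_mat n n"
  shows "qf n (A - B) z = qf n A z - qf n B z"
  unfolding bf_def using assms by (simp add: algebra_simps sum_subtractf)

lemma qf_smult:
  assumes "A \<in> carrier_mat n n"
  shows "qf n (c \<cdot>\<^sub>m A) z = c * qf n A z"
  unfolding bf_def using assms by (simp add: algebra_simps sum_distrib_left)

lemma psd_smult:
  assumes "psd n A" "c \<ge> 0"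
  shows "psd n (complex_of_real c \<cdot>\<^sub>m A)"
  using assms unfolding psd_qpos qpos_def by (auto simp: qf_smult)


lemma qf_diag: "i < n \<Longrightarrow> qf n A (\<lambda>k. if k = i then 1 else 0) = A $$ (i, i)"
  by (simp add: bf_delta_left if_distrib cong: if_cong)


lemma mtrace_psd:
  assumes "psd n A"
  shows "Im (mtrace A) = 0" "Re (mtrace A) \<ge> 0"
proof -
  have c: "A \<in> carrier_mat n n" "qpos n A" using assms psd_qpos by auto
  have t: "mtrace A = (\<Sum>i<n. qf n A (\<lambda>k. if k = i then 1 else 0))"
    unfolding mtrace_def using c by (simp add: qf_diag)
  show "Im (mtrace A) = 0" "Re (mtrace A) \<ge> 0" unfolding t Im_sum Re_sum using c(2)
    by (auto simp: qpos_def sum_nonneg)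
qed


lemma psd_trace0:
  assumes "psd n A" "mtrace A = 0"
  shows "A = 0\<^sub>m n n"
proof -
  have c: "A \<in> carrier_mat n n" "qpos n A" using assms psd_qpos by auto
  have t: "mtrace A = (\<Sum>i<n. qf n A (\<lambda>k. if k = i then 1 else 0))"
    unfolding mtrace_def using c by (simp add: qf_diag)
  have "(\<Sum>i<n. Re (qf n A (\<lambda>k. if k = i then 1 else 0))) = 0"
    using assms(2) unfolding t by (metis Re_sum zero_complex.sel(1))
  then have "\<forall>i\<in>{..<n}. Re (qf n A (\<lambda>k. if k = i then 1 else 0)) = 0"
    using c(2) by (subst sum_nonneg_eq_0_iff[symmetric]) (auto simp: qpos_def)
  then have z: "\<And>i. i < n \<Longrightarrow> qf n A (\<lambda>k. if k = i then 1 else 0) = 0"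
    using c(2) unfolding qpos_def by (auto simp: complex_eq_iff)
  show ?thesis
  proof (rule eq_matI)
    fix i j assume "i < dim_row (0\<^sub>m n n :: complex mat)" "j < dim_col (0\<^sub>m n n :: complex mat)"
    then have ij: "i < n" "j < n" by auto
    have "(\<Sum>l<n. A $$ (i, l) * (if l = j then 1 else 0)) = 0"
      using kernel_rows(1)[OF c(2) z[OF ij(2)] ij(1)] .
    then show "A $$ (i, j) = 0\<^sub>m n n $$ (i, j)" using ij by (simp add: if_distrib cong: if_cong)
  qed (use c in auto)
qed


lemma mtrace_msum:
  assumes "\<And>i. i \<in> I \<Longrightarrow> f i \<in> carrier_mat n n"
  shows "mtrace (msum n f I) = (\<Sum>i\<in>I. mtrace (f i))"
proof -
  have "mtrace (msum n f I) = (\<Sum>k<n. \<Sum>i\<in>I. f i $$ (k, k))"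
    unfolding mtrace_def msum_def by simp
  also have "\<dots> = (\<Sum>i\<in>I. \<Sum>k<n. f i $$ (k, k))" by (rule sum.swap)
  also have "\<dots> = (\<Sum>i\<in>I. mtrace (f i))" unfolding mtrace_def using assms by (intro sum.cong) auto
  finally show ?thesis .
qed


lemma msum_psd_trace0:
  assumes "finite I" "\<And>i. i \<in> I \<Longrightarrow> psd n (f i)" "mtrace (msum n f I) = 0" "i0 \<in> I"
  shows "f i0 = 0\<^sub>m n n"
proof -
  have c: "\<And>i. i \<in> I \<Longrightarrow> f i \<in> carrier_mat n n" using assms(2) psd_qpos by auto
  have "(\<Sum>i\<in>I. mtrace (f i)) = 0" using assms(3) mtrace_msum[OF c, of I] by simp
  then have s0: "(\<Sum>i\<in>I. Re (mtrace (f i))) = 0" by (simp add: Re_sum[symmetric])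
  have nn: "\<And>i. i \<in> I \<Longrightarrow> Re (mtrace (f i)) \<ge> 0" using assms(2) mtrace_psd(2) by metis
  have "\<forall>i\<in>I. Re (mtrace (f i)) = 0" using sum_nonneg_eq_0_iff[OF assms(1), of "\<lambda>i. Re (mtrace (f i))"] nn s0 by simp
  then have "Re (mtrace (f i0)) = 0" using assms(4) by blast
  moreover have "Im (mtrace (f i0)) = 0" using assms(2,4) mtrace_psd(1) by metis
  ultimately have "mtrace (f i0) = 0" by (simp add: complex_eq_iff)
  then show ?thesis using psd_trace0 assms(2,4) by metis
qed


lemma mtrace_minus:
  assumes "A \<in> carrier_mat n n" "B \<in> carrier_mat n n"
  shows "mtrace (A - B) = mtrace A - mtrace B"
  unfolding mtrace_def using assms by (simp add: sum_subtractf)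


lemma mtrace_smult:
  assumes "A \<in> carrier_mat n n"
  shows "mtrace (c \<cdot>\<^sub>m A) = c * mtrace A"
  unfolding mtrace_def using assms by (simp add: sum_distrib_left)


lemma msum_minus:
  assumes "\<And>i. i \<in> I \<Longrightarrow> f i \<in> carrier_mat n n" "\<And>i. i \<in> I \<Longrightarrow> g i \<in> carrier_mat n n"
  shows "msum n (\<lambda>i. f i - g i) I = msum n f I - msum n g I"
proof (rule eq_matI)
  fix i j assume "i < dim_row (msum n f I - msum n g I)" "j < dim_col (msum n f I - msum n g I)"
  then have ij: "i < n" "j < n" by (auto simp: msum_def)
  have e: "\<And>x. x \<in> I \<Longrightarrow> (f x - g x) $$ (i, j) = f x $$ (i, j) - g x $$ (i, j)"
    using assms ij by (metis carrier_matD index_minus_mat(1))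
  show "msum n (\<lambda>i. f i - g i) I $$ (i, j) = (msum n f I - msum n g I) $$ (i, j)"
    unfolding msum_def using ij e by (simp add: sum_subtractf[symmetric])
qed (auto simp: msum_def)


lemma msum_smult:
  assumes "\<And>i. i \<in> I \<Longrightarrow> f i \<in> carrier_mat n n"
  shows "msum n (\<lambda>i. c \<cdot>\<^sub>m f i) I = c \<cdot>\<^sub>m msum n f I"
proof (rule eq_matI)
  fix i j assume "i < dim_row (c \<cdot>\<^sub>m msum n f I)" "j < dim_col (c \<cdot>\<^sub>m msum n f I)"
  then have ij: "i < n" "j < n" by (auto simp: msum_def)
  have e: "\<And>x. x \<in> I \<Longrightarrow> (c \<cdot>\<^sub>m f x) $$ (i, j) = c * f x $$ (i, j)"
    using assms ij by (metis carrier_matD index_smult_mat(1))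
  show "msum n (\<lambda>i. c \<cdot>\<^sub>m f i) I $$ (i, j) = (c \<cdot>\<^sub>m msum n f I) $$ (i, j)"
    unfolding msum_def using ij e by (simp add: sum_distrib_left)
qed (auto simp: msum_def)


lemma psd_ptrace:
  fixes m n :: nat
  assumes X: "psd (m*n) X" and XT: "X = tensorCC m n T P" and T: "T \<in> carrier_mat m m"
    and P: "P = mat n n (\<lambda>(i,j). v i * cnj (v j))"
    and nv: "(\<Sum>j<n. v j * cnj (v j)) = 1"
  shows "psd m T"
proof -
  have "qf n P v = 1" unfolding qf_proj[OF P] using nv by (simp add: mult.commute)
  then have e: "qf m T u = qf (m*n) X (tv n u v)" for u using qf_tensor[of m n T P u v] XT by simp
  have "qpos (m*n) X" using X psd_qpos by auto
  then have "qpos m T" unfolding qpos_def e by blast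
  then show ?thesis using T psd_qpos by auto
qed

lemma ptrace_C_tensor_msum:
  fixes m n :: nat
  assumes A: "\<And>d. d \<in> I \<Longrightarrow> A d \<in> carrier_mat m m" and P: "P \<in> carrier_mat n n"
  shows "ptrace_C m n (msum (m*n) (\<lambda>d. tensorCC m n (A d) P) I) = mtrace (msum m A I) \<cdot>\<^sub>m P"
proof (rule eq_matI)
  fix j j' assume "j < dim_row (mtrace (msum m A I) \<cdot>\<^sub>m P)" "j' < dim_col (mtrace (msum m A I) \<cdot>\<^sub>m P)"
  then have jj: "j < n" "j' < n" using P by auto
  have "ptrace_C m n (msum (m*n) (\<lambda>d. tensorCC m n (A d) P) I) $$ (j, j') =
     (\<Sum>i<m. \<Sum>d\<in>I. A d $$ (i, i) * P $$ (j, j'))"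
    unfolding ptrace_C_def msum_def tensorCC_def using jj by (simp add: idx_lt)
  also have "\<dots> = (\<Sum>i<m. \<Sum>d\<in>I. A d $$ (i, i)) * P $$ (j, j')"
    by (simp add: sum_distrib_right)
  also have "\<dots> = (mtrace (msum m A I) \<cdot>\<^sub>m P) $$ (j, j')"
    unfolding mtrace_def msum_def using jj P by simp
  finally show "ptrace_C m n (msum (m*n) (\<lambda>d. tensorCC m n (A d) P) I) $$ (j, j') = (mtrace (msum m A I) \<cdot>\<^sub>m P) $$ (j, j')" .
qed (use P in \<open>auto simp: ptrace_C_def\<close>)

lemma tensor_smult:
  fixes m n :: nat
  assumes S: "S \<in> carrier_mat m m" and P: "P \<in> carrier_mat n n"
  shows "tensorCC m n S (c \<cdot>\<^sub>m P) = tensorCC m n (c \<cdot>\<^sub>m S) P"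
proof (rule eq_matI)
  fix k l assume "k < dim_row (tensorCC m n (c \<cdot>\<^sub>m S) P)" "l < dim_col (tensorCC m n (c \<cdot>\<^sub>m S) P)"
  then have k': "k < m*n" and l': "l < m*n" by (auto simp: tensorCC_def)
  then have n0: "n > 0" by (cases n) auto
  have kd: "k div n < m" "l div n < m" using k' l' by (auto simp: less_mult_imp_div_less)
  have km: "k mod n < n" "l mod n < n" using n0 by auto
  show "tensorCC m n S (c \<cdot>\<^sub>m P) $$ (k, l) = tensorCC m n (c \<cdot>\<^sub>m S) P $$ (k, l)"
    unfolding tensorCC_def using k' l' kd km S P by simp
qed (auto simp: tensorCC_def)


lemma mat_eqI_entries:
  assumes "A \<in> carrier_mat n n" "B \<in> carrier_mat n n" "\<And>i j. i < n \<Longrightarrow> j < n \<Longrightarrow> A $$ (i,j) = B $$ (i,j)"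
  shows "A = B"
  using assms by (intro eq_matI) auto

theorem mainTheorem2:
  fixes nC nC' :: nat
    and sigma :: "'a::finite \<Rightarrow> 'b::finite \<Rightarrow> 'd::finite \<Rightarrow> 'x::finite \<Rightarrow> 'y::finite \<Rightarrow> 'w::finite \<Rightarrow> complex mat"
    and sigmaDW :: "'d \<Rightarrow> 'w \<Rightarrow> complex mat"
    and psi :: "complex mat"
  assumes asm: "assemblage (nC * nC') sigma"
    and i: "\<forall>x y d w. sigmaDW d w = ptrace_C' nC nC' (msum (nC * nC') (\<lambda>(a, b). sigma a b d x y w) UNIV)"
    and ii: "\<forall>d w x y. msum (nC * nC') (\<lambda>(a, b). sigma a b d x y w) UNIV = tensorCC nC nC' (sigmaDW d w) psi"
    and ext: "extremal_bi_assemblage nC sigmaDW"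
    and pure: "pure_state nC' psi"
  shows "\<exists>sigmaAB :: 'a \<Rightarrow> 'b \<Rightarrow> 'x \<Rightarrow> 'y \<Rightarrow> complex mat.
           (\<forall>a b x y w. sigmaAB a b x y = ptrace_C nC nC' (msum (nC * nC') (\<lambda>d. sigma a b d x y w) UNIV)) \<and>
           (\<forall>a b d x y w. sigma a b d x y w = tensorCC nC nC' (sigmaDW d w) (sigmaAB a b x y))"
proof -
  obtain v where v: "v \<in> carrier_vec nC'" "v \<bullet>c v = 1" "psi = mat nC' nC' (\<lambda>(i, j). v $ i * cnj (v $ j))"
    using pure unfolding pure_state_def by blast
  define vf where "vf j = v $ j" for j
  have P: "psi = mat nC' nC' (\<lambda>(i, j). vf i * cnj (vf j))" using v(3) unfolding vf_def by simp
  have nv: "(\<Sum>j<nC'. vf j * cnj (vf j)) = 1"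
    using v(1,2) unfolding vf_def by (simp add: scalar_prod_def lessThan_atLeast0)
  have Pc: "psi \<in> carrier_mat nC' nC'" using P by simp
  have A1: "\<And>a b d x y w. psd (nC*nC') (sigma a b d x y w)"
    using conjunct1[OF asm[unfolded assemblage_def]] by blast
  have A6: "\<And>a b x y w w'. msum (nC*nC') (\<lambda>d. sigma a b d x y w) UNIV = msum (nC*nC') (\<lambda>d. sigma a b d x y w') UNIV"
    using conjunct1[OF conjunct2[OF conjunct2[OF conjunct2[OF conjunct2[OF conjunct2[OF asm[unfolded assemblage_def]]]]]]] by blast
  have bi: "bi_assemblage nC sigmaDW" using ext unfolding extremal_bi_assemblage_def by blast
  have Ext: "\<And>(p::real) t1 t2. 0 < p \<Longrightarrow> p < 1 \<Longrightarrow> bi_assemblage nC t1 \<Longrightarrow> bi_assemblage nC t2 \<Longrightarrow>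
        (\<forall>d w. sigmaDW d w = complex_of_real p \<cdot>\<^sub>m t1 d w + complex_of_real (1 - p) \<cdot>\<^sub>m t2 d w) \<Longrightarrow> t1 = sigmaDW"
    using ext unfolding extremal_bi_assemblage_def by blast
  have Bpsd: "\<And>d w. psd nC (sigmaDW d w)" using bi unfolding bi_assemblage_def by blast
  have Sc: "\<And>d w. sigmaDW d w \<in> carrier_mat nC nC" using Bpsd psd_qpos by blast
  have Bdens: "\<And>w. mtrace (msum nC (\<lambda>d. sigmaDW d w) UNIV) = 1"
    using bi unfolding bi_assemblage_def density_def by blast
  have Bind: "\<And>w w'. msum nC (\<lambda>d. sigmaDW d w) UNIV = msum nC (\<lambda>d. sigmaDW d w') UNIV"
    using bi unfolding bi_assemblage_def by blast

  have fac: "sigma a b d x y w = tensorCC nC nC' (ptrace_C' nC nC' (sigma a b d x y w)) psi" for a b d x y w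
  proof (rule factor[OF A1 _ P nv])
    show "\<forall>z. Re (qf (nC*nC') (sigma a b d x y w) z) \<le> Re (qf (nC*nC') (tensorCC nC nC' (sigmaDW d w) psi) z)"
    proof
      fix z
      have "Re (qf (nC*nC') ((\<lambda>(a, b). sigma a b d x y w) (a, b)) z)
         \<le> Re (qf (nC*nC') (msum (nC * nC') (\<lambda>(a, b). sigma a b d x y w) UNIV) z)"
        by (rule qf_le_msum) (auto simp: A1[THEN psd_qpos[THEN iffD1]])
      then show "Re (qf (nC*nC') (sigma a b d x y w) z) \<le> Re (qf (nC*nC') (tensorCC nC nC' (sigmaDW d w) psi) z)"
        using ii by simp
    qed
  qed
  define T where "T a b d x y w = ptrace_C' nC nC' (sigma a b d x y w)" for a b d x y w
  have Tc: "\<And>a b d x y w. T a b d x y w \<in> carrier_mat nC nC" unfolding T_def ptrace_C'_def by simp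
  have Tpsd: "\<And>a b d x y w. psd nC (T a b d x y w)"
    using psd_ptrace[OF A1 fac[folded T_def] Tc P nv] .
  have Sdec: "sigmaDW d w = msum nC (\<lambda>(a, b). T a b d x y w) UNIV" for d w x y
  proof -
    have "sigmaDW d w = msum nC (\<lambda>p. ptrace_C' nC nC' ((\<lambda>(a, b). sigma a b d x y w) p)) UNIV"
      using i ptrace_msum by metis
    also have "\<dots> = msum nC (\<lambda>(a, b). T a b d x y w) UNIV"
      by (rule msum_cong) (auto simp: T_def)
    finally show ?thesis .
  qed

  have key: "T a b d x y w = mtrace (msum nC (\<lambda>d. T a b d x y undefined) UNIV) \<cdot>\<^sub>m sigmaDW d w" for a b x y d w
  proof -
    define t where "t d w = T a b d x y w" for d w
    define G where "G w = msum nC (\<lambda>d. t d w) UNIV" for w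
    define c where "c = mtrace (G undefined)"
    define R where "R d w = sigmaDW d w - t d w" for d w
    define SS where "SS w = msum nC (\<lambda>d. sigmaDW d w) UNIV" for w
    have tc: "\<And>d w. t d w \<in> carrier_mat nC nC" unfolding t_def using Tc by blast
    have tpsd: "\<And>d w. psd nC (t d w)" unfolding t_def using Tpsd by blast
    have Gind: "G w = G w'" for w w'
    proof -
      have h: "G w = ptrace_C' nC nC' (msum (nC*nC') (\<lambda>d. sigma a b d x y w) UNIV)" for w
        unfolding G_def t_def T_def ptrace_msum ..
      show ?thesis unfolding h using A6[of a b x y w w'] by simp
    qed
    have Gpsd: "\<And>w. psd nC (G w)" unfolding G_def by (rule psd_msum) (rule tpsd)
    have Gc: "\<And>w. G w \<in> carrier_mat nC nC" unfolding G_def by simp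
    have trG: "\<And>w. mtrace (G w) = c" unfolding c_def using Gind by (rule arg_cong)
    define p where "p = Re c"
    have cp: "c = complex_of_real p"
      using mtrace_psd[OF Gpsd[of undefined]] unfolding p_def c_def by (simp add: complex_eq_iff)
    have p0: "p \<ge> 0" using mtrace_psd[OF Gpsd[of undefined]] unfolding p_def c_def by simp
    have Rc: "\<And>d w. R d w \<in> carrier_mat nC nC" unfolding R_def using Sc tc by (metis minus_carrier_mat)
    have Rpsd: "psd nC (R d w)" for d w
    proof -
      have "qpos nC (R d w)" unfolding qpos_def
      proof
        fix u
        have e: "qf nC (R d w) u = qf nC (sigmaDW d w) u - qf nC (t d w) u"
          unfolding R_def by (rule qf_minus[OF Sc tc])
        have qT: "\<And>a b. qpos nC (T a b d x y w)" using Tpsd psd_qpos by blast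
        have "Re (qf nC ((\<lambda>(a, b). T a b d x y w) (a, b)) u) \<le> Re (qf nC (msum nC (\<lambda>(a, b). T a b d x y w) UNIV) u)"
          by (rule qf_le_msum) (auto simp: qT)
        then have le: "Re (qf nC (t d w) u) \<le> Re (qf nC (sigmaDW d w) u)"
          using Sdec[of d w x y] unfolding t_def by simp
        have "Im (qf nC (sigmaDW d w) u) = 0" "Im (qf nC (t d w) u) = 0"
          using Bpsd[of d w] tpsd[of d w] unfolding psd_qpos qpos_def by auto
        then show "Im (qf nC (R d w) u) = 0 \<and> Re (qf nC (R d w) u) \<ge> 0" using e le by simp
      qed
      then show ?thesis using Rc psd_qpos by blast
    qed
    have MR: "msum nC (\<lambda>d. R d w) UNIV = SS w - G w" for w
      unfolding R_def SS_def G_def by (rule msum_minus) (use Sc tc in auto)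
    have trR: "mtrace (msum nC (\<lambda>d. R d w) UNIV) = 1 - c" for w
      unfolding MR SS_def mtrace_minus[OF msum_carrier Gc] Bdens trG ..
    have "Re (mtrace (msum nC (\<lambda>d. R d undefined) UNIV)) \<ge> 0"
      using mtrace_psd(2)[OF psd_msum[of UNIV nC "\<lambda>d. R d undefined", OF Rpsd]] .
    then have p1: "p \<le> 1" using trR[of undefined] cp by simp
    have goal: "t d w = c \<cdot>\<^sub>m sigmaDW d w"
    proof (cases "p = 0")
      case True
      then have "mtrace (G w) = 0" using trG cp by simp
      then have "t d w = 0\<^sub>m nC nC"
        using msum_psd_trace0[of UNIV nC "\<lambda>d. t d w" d] tpsd unfolding G_def by simp
      then show ?thesis using True cp Sc[of d w] by (intro mat_eqI_entries[of _ nC]) auto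
    next
      case pn0: False
      show ?thesis
      proof (cases "p = 1")
        case True
        then have "mtrace (msum nC (\<lambda>d. R d w) UNIV) = 0" using trR cp by simp
        then have "R d w = 0\<^sub>m nC nC"
          using msum_psd_trace0[of UNIV nC "\<lambda>d. R d w" d] Rpsd by simp
        then have "\<And>i j. i < nC \<Longrightarrow> j < nC \<Longrightarrow> sigmaDW d w $$ (i, j) - t d w $$ (i, j) = 0"
          unfolding R_def using tc Sc by (metis carrier_matD index_minus_mat(1) index_zero_mat(1))
        then show ?thesis using True cp Sc[of d w] tc[of d w] by (intro mat_eqI_entries[of _ nC]) auto
      next
        case pn1: False
        have pp: "0 < p" "p < 1" using p0 p1 pn0 pn1 by auto
        define t1 where "t1 d w = complex_of_real (1/p) \<cdot>\<^sub>m t d w" for d w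
        define t2 where "t2 d w = complex_of_real (1/(1-p)) \<cdot>\<^sub>m R d w" for d w
        have b1: "bi_assemblage nC t1" unfolding bi_assemblage_def
        proof (intro conjI allI)
          fix d w show "psd nC (t1 d w)" unfolding t1_def by (rule psd_smult[OF tpsd]) (use pp in simp)
        next
          fix w
          have m: "msum nC (\<lambda>d. t1 d w) UNIV = complex_of_real (1/p) \<cdot>\<^sub>m G w"
            unfolding t1_def G_def by (rule msum_smult) (use tc in auto)
          show "density nC (msum nC (\<lambda>d. t1 d w) UNIV)" unfolding density_def
          proof
            show "psd nC (msum nC (\<lambda>d. t1 d w) UNIV)" unfolding m by (rule psd_smult[OF Gpsd]) (use pp in simp)
            show "mtrace (msum nC (\<lambda>d. t1 d w) UNIV) = 1" unfolding m mtrace_smult[OF Gc] trG cp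
              using pp by simp
          qed
        next
          fix w w'
          show "msum nC (\<lambda>d. t1 d w) UNIV = msum nC (\<lambda>d. t1 d w') UNIV"
            unfolding t1_def msum_smult[OF tc] G_def[symmetric] using Gind by metis
        qed
        have b2: "bi_assemblage nC t2" unfolding bi_assemblage_def
        proof (intro conjI allI)
          fix d w show "psd nC (t2 d w)" unfolding t2_def by (rule psd_smult[OF Rpsd]) (use pp in simp)
        next
          fix w
          have m: "msum nC (\<lambda>d. t2 d w) UNIV = complex_of_real (1/(1-p)) \<cdot>\<^sub>m msum nC (\<lambda>d. R d w) UNIV"
            unfolding t2_def by (rule msum_smult) (use Rc in auto)
          show "density nC (msum nC (\<lambda>d. t2 d w) UNIV)" unfolding density_def
          proof
            have "psd nC (msum nC (\<lambda>d. R d w) UNIV)" by (rule psd_msum) (rule Rpsd)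
            then show "psd nC (msum nC (\<lambda>d. t2 d w) UNIV)" unfolding m
              by (rule psd_smult) (use pp in simp)
            have "1 - complex_of_real p \<noteq> 0" using pp by (simp add: complex_eq_iff)
            then show "mtrace (msum nC (\<lambda>d. t2 d w) UNIV) = 1" unfolding m mtrace_smult[OF msum_carrier] trR cp
              using pp by (simp add: field_simps)
          qed
        next
          fix w w'
          have "msum nC (\<lambda>d. R d w) UNIV = msum nC (\<lambda>d. R d w') UNIV"
            unfolding MR SS_def using Bind Gind by metis
          then show "msum nC (\<lambda>d. t2 d w) UNIV = msum nC (\<lambda>d. t2 d w') UNIV"
            unfolding t2_def msum_smult[OF Rc] by metis
        qed
        have dec: "\<forall>d w. sigmaDW d w = complex_of_real p \<cdot>\<^sub>m t1 d w + complex_of_real (1 - p) \<cdot>\<^sub>m t2 d w"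
        proof (intro allI)
          fix d w
          have nz: "complex_of_real p \<noteq> 0" "complex_of_real (1 - p) \<noteq> 0" using pp by auto
          show "sigmaDW d w = complex_of_real p \<cdot>\<^sub>m t1 d w + complex_of_real (1 - p) \<cdot>\<^sub>m t2 d w"
            using Sc[of d w] tc[of d w] Rc[of d w] nz
            by (intro mat_eqI_entries[of _ nC]) (auto simp: t1_def t2_def R_def field_simps)
        qed
        have "t1 = sigmaDW" using Ext[OF pp b1 b2 dec] .
        then have e: "t1 d w = sigmaDW d w" by simp
        have nz: "complex_of_real p \<noteq> 0" using pp by auto
        show ?thesis unfolding cp using e[symmetric] tc[of d w] Sc[of d w] nz
          by (intro mat_eqI_entries[of _ nC]) (auto simp: t1_def)
      qed
    qed
    then show ?thesis unfolding t_def c_def G_def .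
  qed

  define sigmaAB where "sigmaAB a b x y = ptrace_C nC nC' (msum (nC * nC') (\<lambda>d. sigma a b d x y undefined) UNIV)" for a b x y
  show ?thesis
  proof (intro exI[of _ sigmaAB] conjI allI)
    fix a b x y w
    show "sigmaAB a b x y = ptrace_C nC nC' (msum (nC * nC') (\<lambda>d. sigma a b d x y w) UNIV)"
      unfolding sigmaAB_def using A6 by metis
  next
    fix a b d x y w
    have "sigmaAB a b x y = ptrace_C nC nC' (msum (nC * nC') (\<lambda>d. tensorCC nC nC' (T a b d x y undefined) psi) UNIV)"
      unfolding sigmaAB_def T_def using fac by (metis)
    also have "\<dots> = mtrace (msum nC (\<lambda>d. T a b d x y undefined) UNIV) \<cdot>\<^sub>m psi"
      by (rule ptrace_C_tensor_msum[OF Tc Pc])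
    finally have ab: "sigmaAB a b x y = mtrace (msum nC (\<lambda>d. T a b d x y undefined) UNIV) \<cdot>\<^sub>m psi" .
    have "sigma a b d x y w = tensorCC nC nC' (T a b d x y w) psi" using fac unfolding T_def by metis
    also have "\<dots> = tensorCC nC nC' (mtrace (msum nC (\<lambda>d. T a b d x y undefined) UNIV) \<cdot>\<^sub>m sigmaDW d w) psi"
      using key by metis
    also have "\<dots> = tensorCC nC nC' (sigmaDW d w) (sigmaAB a b x y)"
      unfolding ab by (rule tensor_smult[OF Sc Pc, symmetric])
    finally show "sigma a b d x y w = tensorCC nC nC' (sigmaDW d w) (sigmaAB a b x y)" .
  qed
qed

end
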